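(* For every graph $G$, $\operatorname{box}(G)\le 2\,MED(G)+2$.
   Context: A dominating edge set of $G$ is a set $D$ of edges such that every edge of $G$ not in $D$ shares an endpoint with some edge of $D$; $MED(G)$ is the minimum cardinality of a dominating edge set. The boxicity $\operatorname{box}(G)$ is the minimum $b$ such that $G$ is the intersection graph of axis-parallel boxes in $\mathbb{R}^b$ (products of $b$ closed intervals), one box per vertex. *)

theory Defs
  imports Complex_Main
begin

definition simple_graph :: "'a set \<Rightarrow> 'a set set \<Rightarrow> bool" where
  "simple_graph V E \<longleftrightarrow> finite V \<and>
     (\<forall>e\<in>E. \<exists>u v. u \<in> V \<and> v \<in> V \<and> u \<noteq> v \<and> e = {u, v})"

definition dominating_edge_set :: "'a set set \<Rightarrow> 'a set set \<Rightarrow> bool" where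
  "dominating_edge_set E D \<longleftrightarrow> D \<subseteq> E \<and>
     (\<forall>e\<in>E - D. \<exists>d\<in>D. e \<inter> d \<noteq> {})"

definition MED :: "'a set set \<Rightarrow> nat" where
  "MED E = (LEAST k. \<exists>D. dominating_edge_set E D \<and> card D = k)"

text \<open>G has a box representation in R^b: each vertex v gets the box
  \<Prod>_{i<b} [l v i, r v i] (closed, nonempty intervals), and two distinct
  vertices are adjacent iff their boxes intersect.\<close>
definition box_representation :: "'a set \<Rightarrow> 'a set set \<Rightarrow> nat \<Rightarrow> bool" where
  "box_representation V E b \<longleftrightarrow>
     (\<exists>l r :: 'a \<Rightarrow> nat \<Rightarrow> real.
        (\<forall>v\<in>V. \<forall>i<b. l v i \<le> r v i) \<and>
        (\<forall>u\<in>V. \<forall>v\<in>V. u \<noteq> v \<longrightarrow>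
            ({u, v} \<in> E \<longleftrightarrow> (\<forall>i<b. l u i \<le> r v i \<and> l v i \<le> r u i))))"

definition boxicity :: "'a set \<Rightarrow> 'a set set \<Rightarrow> nat" where
  "boxicity V E = (LEAST b. box_representation V E b)"

end

theory Submission
  imports Defs
begin

lemma box_cover:
  fixes V :: "'a set" and E :: "'a set set"
  assumes sg: "simple_graph V E" and SV: "S \<subseteq> V"
    and cov: "\<forall>e\<in>E. e \<inter> S \<noteq> {}"
  shows "box_representation V E (card S + 1)"
proof -
  have fV: "finite V" using sg by (simp add: simple_graph_def)
  then have fS: "finite S" using SV finite_subset by blast
  obtain xs where xs: "set xs = S" "distinct xs" using fS finite_distinct_list by blast
  have n: "length xs = card S" using xs distinct_card by fastforce
  obtain g :: "'a \<Rightarrow> nat" and M where g: "g ` V = {i. i < M}" "inj_on g V"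
    using finite_imp_inj_to_nat_seg[OF fV] by blast
  have gM: "v \<in> V \<Longrightarrow> g v \<le> M" for v
  proof -
    assume "v \<in> V" then have "g v \<in> g ` V" by blast
    then show ?thesis using g(1) by simp
  qed
  define l :: "'a \<Rightarrow> nat \<Rightarrow> real" where "l v i = (if i < length xs then
       (if v = xs!i then 0 else if {v, xs!i} \<in> E then 0 else 1)
       else (if v \<in> S then 0 else real (g v)))" for v i
  define r :: "'a \<Rightarrow> nat \<Rightarrow> real" where "r v i = (if i < length xs then
       (if v = xs!i then 0 else 1)
       else (if v \<in> S then real M else real (g v)))" for v i
  have edge: "\<exists>a b. a \<noteq> b \<and> e = {a,b}" if "e \<in> E" for e
    using sg that unfolding simple_graph_def by blast
  have A: "(\<forall>v\<in>V. \<forall>i<card S + 1. l v i \<le> r v i)"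
    using gM by (auto simp: l_def r_def)
  have B: "({u, v} \<in> E \<longleftrightarrow> (\<forall>i<card S + 1. l u i \<le> r v i \<and> l v i \<le> r u i))"
    if u: "u \<in> V" and v: "v \<in> V" and uv: "u \<noteq> v" for u v
  proof
    assume e: "{u, v} \<in> E"
    have sym: "{v, u} \<in> E" using e by (simp add: insert_commute)
    show "\<forall>i<card S + 1. l u i \<le> r v i \<and> l v i \<le> r u i"
    proof (intro allI impI)
      fix i assume i: "i < card S + 1"
      show "l u i \<le> r v i \<and> l v i \<le> r u i"
      proof (cases "i < length xs")
        case True
        then show ?thesis using e sym uv by (auto simp: l_def r_def)
      next
        case False
        have "{u, v} \<inter> S \<noteq> {}" using cov e by (rule bspec)
        then have "u \<in> S \<or> v \<in> S" by auto
        then show ?thesis using False gM u v by (auto simp: l_def r_def)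
      qed
    qed
  next
    assume all: "\<forall>i<card S + 1. l u i \<le> r v i \<and> l v i \<le> r u i"
    show "{u, v} \<in> E"
    proof (rule ccontr)
      assume ne: "{u, v} \<notin> E"
      have ne2: "{v, u} \<notin> E" using ne by (simp add: insert_commute)
      show False
      proof (cases "u \<in> S \<or> v \<in> S")
        case True
        then show False
        proof
          assume "u \<in> S"
          then obtain i where i: "i < length xs" "xs!i = u" using xs(1) by (metis in_set_conv_nth)
          then show False using all[rule_format, of i] n ne ne2 uv by (auto simp: l_def r_def)
        next
          assume "v \<in> S"
          then obtain i where i: "i < length xs" "xs!i = v" using xs(1) by (metis in_set_conv_nth)
          then show False using all[rule_format, of i] n ne ne2 uv by (auto simp: l_def r_def)
        qed
      next
        case False
        have "g u \<noteq> g v" using g(2) u v uv by (meson inj_on_eq_iff)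
        then show False using all[rule_format, of "length xs"] n False by (auto simp: l_def r_def)
      qed
    qed
  qed
  show ?thesis unfolding box_representation_def using A B by blast
qed

theorem theorem16:
  fixes V :: "'a set" and E :: "'a set set"
  assumes "simple_graph V E"
  shows "boxicity V E \<le> 2 * MED E + 2"
proof -
  have edge: "\<exists>a b. a \<in> V \<and> b \<in> V \<and> a \<noteq> b \<and> e = {a,b}" if "e \<in> E" for e
    using assms that unfolding simple_graph_def by blast
  have fV: "finite V" using assms by (simp add: simple_graph_def)
  have "E \<subseteq> Pow V"
  proof
    fix e assume "e \<in> E"
    then obtain a b where "a \<in> V" "b \<in> V" "e = {a,b}" using edge by blast
    then show "e \<in> Pow V" by blast
  qed
  then have fE: "finite E" using fV finite_subset by blast
  define P where "P = (\<lambda>k. \<exists>D. dominating_edge_set E D \<and> card D = k)"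
  have "P (card E)" unfolding P_def dominating_edge_set_def by blast
  then have PL: "P (Least P)" by (rule LeastI)
  have "MED E = Least P" unfolding MED_def P_def by (rule refl)
  then have "\<exists>D. dominating_edge_set E D \<and> card D = MED E" using PL unfolding P_def by simp
  then obtain D where D: "dominating_edge_set E D" "card D = MED E" by blast
  have DE: "D \<subseteq> E" using D(1) by (simp add: dominating_edge_set_def)
  have fD: "finite D" using DE fE finite_subset by blast
  define S where "S = \<Union>D"
  have SV: "S \<subseteq> V"
  proof
    fix x assume "x \<in> S"
    then obtain e where e: "e \<in> D" "x \<in> e" unfolding S_def by blast
    then have "e \<in> E" using DE by blast
    then obtain a b where "a \<in> V" "b \<in> V" "e = {a,b}" using edge by blast
    then show "x \<in> V" using e by blast
  qed
  have cov: "\<forall>e\<in>E. e \<inter> S \<noteq> {}"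
  proof
    fix e assume e: "e \<in> E"
    show "e \<inter> S \<noteq> {}"
    proof (cases "e \<in> D")
      case True
      obtain a b where "e = {a,b}" using edge[OF e] by blast
      then show ?thesis using True unfolding S_def by blast
    next
      case False
      then show ?thesis using D(1) e unfolding dominating_edge_set_def S_def by blast
    qed
  qed
  have c2: "card e = 2" if eD: "e \<in> D" for e
  proof -
    have "e \<in> E" using DE eD by blast
    then obtain a b where "a \<noteq> b" "e = {a,b}" using edge by blast
    then show ?thesis by simp
  qed
  have "card S \<le> sum card D" unfolding S_def by (rule card_Union_le_sum_card)
  also have "\<dots> = 2 * card D" using c2 by simp
  finally have cS: "card S \<le> 2 * MED E" using D(2) by simp
  have "box_representation V E (card S + 1)" by (rule box_cover[OF assms SV cov])
  then have "boxicity V E \<le> card S + 1" unfolding boxicity_def by (rule Least_le)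
  then show ?thesis using cS by simp
qed

end
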